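(* Let $(\mathcal D,\mathcal R)$ be a CLKID$^\omega_N$ pre-proof tree whose root is labelled by the sequent $S$. Normalising it yields a pre-proof tree-set $(\mathcal{MD},\mathcal{MR})$ with the following two properties. (1) $(\mathcal{MD},\mathcal{MR})$ contains a tree whose root is labelled by $S$. (2) In every rb-path $[R,\dots,H,B]$ of $(\mathcal{MD},\mathcal{MR})$, the bud $B$ is the only node labelled by the premise of a $(Subst)$ step. Moreover, a node of such an rb-path is a $(Subst)$-node if and only if it is the IH-node $H$.
   Context: Rules. CLKID$^\omega_N$ is a sequent calculus for first-order logic with inductive definitions. Among its rules, $(Subst)$ infers $\Gamma[\theta]\vdash\Delta[\theta]$ from $\Gamma\vdash\Delta$ for a substitution $\theta$. A $(Subst)$-node is a node whose sequent is the conclusion of a $(Subst)$ step. Pre-proofs. A pre-proof tree $(\mathcal D,\mathcal R)$ is a finite derivation tree. Each terminal node is either a leaf (the conclusion of a 0-premise rule) or a bud, and $\mathcal R$ assigns to each bud a companion node labelled by the same sequent. A pre-proof tree-set $(\mathcal{MD},\mathcal{MR})$ is a finite set of such trees in which companions may lie in any tree. $S(N)$ denotes the label of node $N$. Paths. A path is a list of nodes in which each next node is either labelled by a premise of the rule applied at the current internal node (its child), or is the companion of the current node when that node is a bud. An rb-path is a path $[R,\dots,H,B]$ from the root $R$ of a tree to a bud $B$ of the same tree that contains no other bud; $H$ is called the IH-node. Normalisation. It is the exhaustive application of the following operations. (O1) For an internal non-bud node $N$ labelled by the premise of a $(Subst)$ step: the subtree rooted at $N$ is detached to form a new tree rooted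 at a copy of $N$, and $N$'s original position becomes a bud whose companion is that new root. (O2) For a non-root companion $C$: the subtree rooted at $C$ is detached to form a new tree with root $C^*$ labelled $S(C)$, which becomes the companion of the buds formerly pointing to $C$. At $C$'s original position, a node labelled $S(C)$ becomes the conclusion of a $(Subst)$ step with the empty substitution, whose premise is a new bud with companion $C^*$. (O3) For a bud $B$ whose sequent is the premise of a rule other than $(Subst)$: apply $(Subst)$ with the empty substitution to $S(B)$, and the node labelled by its premise becomes the new bud, with the same companion. *)

theory Defs
  imports Main
begin

(* The theorem is purely structural.  The calculus is kept abstract:
     'q  : sequents
     'r  : names of the rules other than (Subst)
     's  : substitutions
     sapp th S : the sequent S[th]
     valid r Ps C : "C follows from premises Ps by rule r" (non-Subst rules)
     eps : the empty substitution
   A pre-proof tree-set is a finite graph of nodes (natural numbers) with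
   root set, labels, the rule applied at each node (None for buds), the
   ordered list of children (premises) and the companion of each bud.
   ------------------------------------------------------------------------ *)

datatype ('r, 's) rstep = Rule 'r | Subst 's

record ('q, 'r, 's) ptset =
  nodes :: "nat set"
  roots :: "nat set"
  lab   :: "nat \<Rightarrow> 'q"
  app   :: "nat \<Rightarrow> ('r, 's) rstep option"
  kids  :: "nat \<Rightarrow> nat list"
  comp  :: "nat \<Rightarrow> nat option"

definition edges :: "('q, 'r, 's) ptset \<Rightarrow> (nat \<times> nat) set" where
  "edges T = {(p, c). p \<in> nodes T \<and> c \<in> set (kids T p)}"

definition is_bud :: "('q, 'r, 's) ptset \<Rightarrow> nat \<Rightarrow> bool" where
  "is_bud T n \<longleftrightarrow> n \<in> nodes T \<and> comp T n \<noteq> None"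

definition subst_premise :: "('q, 'r, 's) ptset \<Rightarrow> nat \<Rightarrow> bool" where
  "subst_premise T n \<longleftrightarrow>
     (\<exists>p \<in> nodes T. \<exists>th. app T p = Some (Subst th) \<and> n \<in> set (kids T p))"

definition subst_node :: "('q, 'r, 's) ptset \<Rightarrow> nat \<Rightarrow> bool" where
  "subst_node T n \<longleftrightarrow> n \<in> nodes T \<and> (\<exists>th. app T n = Some (Subst th))"

definition preproof ::
  "('s \<Rightarrow> 'q \<Rightarrow> 'q) \<Rightarrow> ('r \<Rightarrow> 'q list \<Rightarrow> 'q \<Rightarrow> bool) \<Rightarrow> ('q, 'r, 's) ptset \<Rightarrow> bool" where
  "preproof sapp valid T \<longleftrightarrow>
     finite (nodes T) \<and> roots T \<subseteq> nodes T \<and> roots T \<noteq> {} \<and>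
     (\<forall>n \<in> nodes T. set (kids T n) \<subseteq> nodes T \<and> distinct (kids T n)) \<and>
     (\<forall>p1 \<in> nodes T. \<forall>p2 \<in> nodes T. \<forall>c.
        c \<in> set (kids T p1) \<longrightarrow> c \<in> set (kids T p2) \<longrightarrow> p1 = p2) \<and>
     (\<forall>r \<in> roots T. \<forall>p \<in> nodes T. r \<notin> set (kids T p)) \<and>
     (\<forall>n \<in> nodes T. \<exists>r \<in> roots T. (r, n) \<in> (edges T)\<^sup>*) \<and>
     (\<forall>n \<in> nodes T.
        (app T n = None \<and> kids T n = [] \<and> comp T n \<noteq> None) \<or>
        (app T n \<noteq> None \<and> comp T n = None)) \<and>
     (\<forall>n \<in> nodes T. \<forall>c. comp T n = Some c \<longrightarrow>
        c \<in> nodes T \<and> app T c \<noteq> None \<and> lab T c = lab T n) \<and>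
     (\<forall>n \<in> nodes T. \<forall>th. app T n = Some (Subst th) \<longrightarrow>
        (\<exists>c. kids T n = [c] \<and> lab T n = sapp th (lab T c))) \<and>
     (\<forall>n \<in> nodes T. \<forall>r. app T n = Some (Rule r) \<longrightarrow>
        valid r (map (lab T) (kids T n)) (lab T n))"

definition is_path :: "('q, 'r, 's) ptset \<Rightarrow> nat list \<Rightarrow> bool" where
  "is_path T p \<longleftrightarrow> p \<noteq> [] \<and> set p \<subseteq> nodes T \<and>
     (\<forall>i. Suc i < length p \<longrightarrow>
        p ! Suc i \<in> set (kids T (p ! i)) \<or> comp T (p ! i) = Some (p ! Suc i))"

definition rb_path :: "('q, 'r, 's) ptset \<Rightarrow> nat list \<Rightarrow> bool" where
  "rb_path T p \<longleftrightarrow> is_path T p \<and> 2 \<le> length p \<and> hd p \<in> roots T \<and>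
     is_bud T (last p) \<and> (\<forall>x \<in> set (butlast p). \<not> is_bud T x) \<and>
     (hd p, last p) \<in> (edges T)\<^sup>*"

definition repl :: "nat \<Rightarrow> nat \<Rightarrow> nat list \<Rightarrow> nat list" where
  "repl a b xs = map (\<lambda>x. if x = a then b else x) xs"

definition op1 :: "('q, 'r, 's) ptset \<Rightarrow> ('q, 'r, 's) ptset \<Rightarrow> bool" where
  "op1 T T' \<longleftrightarrow> (\<exists>N P th M.
     N \<in> nodes T \<and> P \<in> nodes T \<and> app T P = Some (Subst th) \<and>
     N \<in> set (kids T P) \<and> kids T N \<noteq> [] \<and> comp T N = None \<and>
     M \<notin> nodes T \<and>
     T' = T\<lparr> nodes := insert M (nodes T), roots := insert N (roots T),
            lab := (lab T)(M := lab T N), app := (app T)(M := None),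
            kids := (kids T)(P := repl N M (kids T P), M := []),
            comp := (comp T)(M := Some N) \<rparr>)"

definition op2 :: "'s \<Rightarrow> ('q, 'r, 's) ptset \<Rightarrow> ('q, 'r, 's) ptset \<Rightarrow> bool" where
  "op2 eps T T' \<longleftrightarrow> (\<exists>C P B D E.
     C \<in> nodes T \<and> C \<notin> roots T \<and> B \<in> nodes T \<and> comp T B = Some C \<and>
     P \<in> nodes T \<and> C \<in> set (kids T P) \<and>
     D \<notin> nodes T \<and> E \<notin> nodes T \<and> D \<noteq> E \<and>
     T' = T\<lparr> nodes := insert D (insert E (nodes T)), roots := insert C (roots T),
            lab := (lab T)(D := lab T C, E := lab T C),
            app := (app T)(D := Some (Subst eps), E := None),
            kids := (kids T)(P := repl C D (kids T P), D := [E], E := []),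
            comp := (comp T)(D := None, E := Some C) \<rparr>)"

definition op3 :: "'s \<Rightarrow> ('q, 'r, 's) ptset \<Rightarrow> ('q, 'r, 's) ptset \<Rightarrow> bool" where
  "op3 eps T T' \<longleftrightarrow> (\<exists>B P r D.
     is_bud T B \<and> P \<in> nodes T \<and> app T P = Some (Rule r) \<and> B \<in> set (kids T P) \<and>
     D \<notin> nodes T \<and>
     T' = T\<lparr> nodes := insert D (nodes T),
            lab := (lab T)(D := lab T B),
            app := (app T)(D := Some (Subst eps)),
            kids := (kids T)(P := repl B D (kids T P), D := [B]),
            comp := (comp T)(D := None) \<rparr>)"

definition norm_step :: "'s \<Rightarrow> ('q, 'r, 's) ptset \<Rightarrow> ('q, 'r, 's) ptset \<Rightarrow> bool" where
  "norm_step eps T T' \<longleftrightarrow> op1 T T' \<or> op2 eps T T' \<or> op3 eps T T'"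

definition normalises :: "'s \<Rightarrow> ('q, 'r, 's) ptset \<Rightarrow> ('q, 'r, 's) ptset \<Rightarrow> bool" where
  "normalises eps T T' \<longleftrightarrow> (norm_step eps)\<^sup>*\<^sup>* T T' \<and> \<not> (\<exists>T''. norm_step eps T' T'')"

end

theory Submission
  imports Defs
begin


lemma set_repl: "set (repl a b xs) = (if a \<in> set xs then insert b (set xs - {a}) else set xs)"
  unfolding repl_def by auto

lemma mem_repl: "x \<in> set (repl a b xs) \<longleftrightarrow> (x = b \<and> a \<in> set xs) \<or> (x \<noteq> a \<and> x \<in> set xs)"
  unfolding repl_def by auto

lemma distinct_repl: "distinct xs \<Longrightarrow> b \<notin> set xs \<Longrightarrow> distinct (repl a b xs)"
  unfolding repl_def by (induction xs) auto

lemma map_repl: "f b = f a \<Longrightarrow> map f (repl a b xs) = map f xs"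
  unfolding repl_def by (induction xs) auto

lemma repl_Nil: "repl a b xs = [] \<longleftrightarrow> xs = []"
  unfolding repl_def by auto

lemma repl_single: "repl a b [a] = [b]"
  unfolding repl_def by auto

lemma preproof_unfold:
  assumes pre: "preproof sapp valid T"
  shows "finite (nodes T)" "roots T \<subseteq> nodes T" "roots T \<noteq> {}"
    and "\<forall>n \<in> nodes T. set (kids T n) \<subseteq> nodes T \<and> distinct (kids T n)"
    and "\<forall>p1 \<in> nodes T. \<forall>p2 \<in> nodes T. \<forall>c.
        c \<in> set (kids T p1) \<longrightarrow> c \<in> set (kids T p2) \<longrightarrow> p1 = p2"
    and "\<forall>r \<in> roots T. \<forall>p \<in> nodes T. r \<notin> set (kids T p)"
    and "\<forall>n \<in> nodes T. \<exists>r \<in> roots T. (r, n) \<in> (edges T)\<^sup>*"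
    and "\<forall>n \<in> nodes T.
        (app T n = None \<and> kids T n = [] \<and> comp T n \<noteq> None) \<or>
        (app T n \<noteq> None \<and> comp T n = None)"
    and "\<forall>n \<in> nodes T. \<forall>c. comp T n = Some c \<longrightarrow>
        c \<in> nodes T \<and> app T c \<noteq> None \<and> lab T c = lab T n"
    and "\<forall>n \<in> nodes T. \<forall>th. app T n = Some (Subst th) \<longrightarrow>
        (\<exists>c. kids T n = [c] \<and> lab T n = sapp th (lab T c))"
    and "\<forall>n \<in> nodes T. \<forall>r. app T n = Some (Rule r) \<longrightarrow>
        valid r (map (lab T) (kids T n)) (lab T n)"
  using pre unfolding preproof_def by blast+




lemma op3_preproof:
  assumes pre: "preproof sapp valid T" and es: "\<And>X. sapp eps X = X"
    and B: "is_bud T B" and P: "P \<in> nodes T" and aP: "app T P = Some (Rule r)"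
    and BP: "B \<in> set (kids T P)" and D: "D \<notin> nodes T"
    and T': "T' = T\<lparr> nodes := insert D (nodes T),
            lab := (lab T)(D := lab T B),
            app := (app T)(D := Some (Subst eps)),
            kids := (kids T)(P := repl B D (kids T P), D := [B]),
            comp := (comp T)(D := None) \<rparr>"
  shows "preproof sapp valid T'"
proof -
  note U = preproof_unfold[OF pre]
  note fin = U(1) and rt = U(2,3) and kd = U(4) and up = U(5) and rk = U(6) and reach = U(7)
    and bi = U(8) and cp = U(9) and sb = U(10) and rl = U(11)
  have Bn: "B \<in> nodes T" "comp T B \<noteq> None" using B unfolding is_bud_def by auto
  have DB: "D \<noteq> B" "D \<noteq> P" using D Bn P by auto
  have Dks: "D \<notin> set (kids T x)" if "x \<in> nodes T" for x using kd that D by blast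
  have nx: "nodes T' = insert D (nodes T)" using T' by simp
  have kx: "kids T' x = (if x = D then [B] else if x = P then repl B D (kids T P) else kids T x)" for x
    using T' DB by auto
  have ck: "c \<in> set (kids T' p) \<Longrightarrow> p \<in> nodes T' \<Longrightarrow>
     (p = D \<and> c = B) \<or> (p = P \<and> (c = D \<or> (c \<in> set (kids T P) \<and> c \<noteq> B))) \<or>
     (p \<noteq> P \<and> p \<noteq> D \<and> p \<in> nodes T \<and> c \<in> set (kids T p) \<and> c \<noteq> D)" for c p
    using kx nx Dks by (auto simp: mem_repl split: if_splits)
  have reach1: "(r, n) \<in> (edges T')\<^sup>*" if "(r, n) \<in> (edges T)\<^sup>*" for r n
    using that
  proof (induction rule: rtrancl_induct)
    case base then show ?case by simp
  next
    case (step m n)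
    show ?case
    proof (cases "m = P \<and> n = B")
      case True
      have "(P, D) \<in> edges T'" "(D, B) \<in> edges T'"
        using BP P DB unfolding edges_def by (auto simp: kx nx mem_repl)
      then show ?thesis using step(3) True by (meson rtrancl.rtrancl_into_rtrancl)
    next
      case False
      have "(m, n) \<in> edges T'"
        using step(2) False DB D unfolding edges_def by (auto simp: kx nx mem_repl)
      then show ?thesis using step(3) by (meson rtrancl.rtrancl_into_rtrancl)
    qed
  qed
  have PD: "(P, D) \<in> edges T'" using BP P DB unfolding edges_def by (auto simp: kx nx mem_repl)
  have labx: "lab T' x = (if x = D then lab T B else lab T x)" for x using T' by simp
  have appx: "app T' x = (if x = D then Some (Subst eps) else app T x)" for x using T' by simp
  have compx: "comp T' x = (if x = D then None else comp T x)" for x using T' by simp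
  have rootsx: "roots T' = roots T" using T' by simp
  have mapl: "map (lab T') xs = map (lab T) xs" if "D \<notin> set xs" for xs
    using that by (auto simp: labx)
  show ?thesis
    unfolding preproof_def
  proof (intro conjI)
    show "finite (nodes T')" using fin nx by simp
    show "roots T' \<subseteq> nodes T'" using rt rootsx nx by auto
    show "roots T' \<noteq> {}" using rt rootsx by simp
    show "\<forall>n \<in> nodes T'. set (kids T' n) \<subseteq> nodes T' \<and> distinct (kids T' n)"
    proof
      fix n assume n: "n \<in> nodes T'"
      show "set (kids T' n) \<subseteq> nodes T' \<and> distinct (kids T' n)"
        using n kd Bn P Dks by (auto simp: kx nx set_repl intro!: distinct_repl)
    qed
    show "\<forall>p1 \<in> nodes T'. \<forall>p2 \<in> nodes T'. \<forall>c.
        c \<in> set (kids T' p1) \<longrightarrow> c \<in> set (kids T' p2) \<longrightarrow> p1 = p2"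
    proof (intro ballI allI impI)
      fix p1 p2 c assume "p1 \<in> nodes T'" "p2 \<in> nodes T'" "c \<in> set (kids T' p1)" "c \<in> set (kids T' p2)"
      then have h1: "(p1 = D \<and> c = B) \<or> (p1 = P \<and> (c = D \<or> (c \<in> set (kids T P) \<and> c \<noteq> B))) \<or>
     (p1 \<noteq> P \<and> p1 \<noteq> D \<and> p1 \<in> nodes T \<and> c \<in> set (kids T p1) \<and> c \<noteq> D)"
        and h2: "(p2 = D \<and> c = B) \<or> (p2 = P \<and> (c = D \<or> (c \<in> set (kids T P) \<and> c \<noteq> B))) \<or>
     (p2 \<noteq> P \<and> p2 \<noteq> D \<and> p2 \<in> nodes T \<and> c \<in> set (kids T p2) \<and> c \<noteq> D)"
        using ck by blast+
      have u: "\<And>q. q \<in> nodes T \<Longrightarrow> c \<in> set (kids T q) \<Longrightarrow> c \<in> set (kids T P) \<Longrightarrow> q = P"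
        using up P by blast
      have u2: "\<And>q. q \<in> nodes T \<Longrightarrow> B \<in> set (kids T q) \<Longrightarrow> q = P"
        using up P BP by blast
      have g: "p = D" if "c = B" and h: "(p = D \<and> c = B) \<or> (p = P \<and> (c = D \<or> (c \<in> set (kids T P) \<and> c \<noteq> B))) \<or>
     (p \<noteq> P \<and> p \<noteq> D \<and> p \<in> nodes T \<and> c \<in> set (kids T p) \<and> c \<noteq> D)" for p
      proof -
        have "\<not> (p = P \<and> (c = D \<or> (c \<in> set (kids T P) \<and> c \<noteq> B)))" using that(1) DB(1) by auto
        moreover have "\<not> (p \<noteq> P \<and> p \<noteq> D \<and> p \<in> nodes T \<and> c \<in> set (kids T p) \<and> c \<noteq> D)"
          using that(1) u2 by auto
        ultimately show "p = D" using h by auto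
      qed
      have g2: "p = P" if "c = D" and h: "(p = D \<and> c = B) \<or> (p = P \<and> (c = D \<or> (c \<in> set (kids T P) \<and> c \<noteq> B))) \<or>
     (p \<noteq> P \<and> p \<noteq> D \<and> p \<in> nodes T \<and> c \<in> set (kids T p) \<and> c \<noteq> D)" for p
        using that DB(1) by auto
      have g3: "p \<in> nodes T \<and> c \<in> set (kids T p)" if "c \<noteq> D" "c \<noteq> B" and h: "(p = D \<and> c = B) \<or> (p = P \<and> (c = D \<or> (c \<in> set (kids T P) \<and> c \<noteq> B))) \<or>
     (p \<noteq> P \<and> p \<noteq> D \<and> p \<in> nodes T \<and> c \<in> set (kids T p) \<and> c \<noteq> D)" for p
        using that P by auto
      show "p1 = p2"
      proof (cases "c = B")
        case True then show ?thesis using g[OF True h1] g[OF True h2] by simp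
      next
        case cB: False
        show ?thesis
        proof (cases "c = D")
          case True then show ?thesis using g2[OF True h1] g2[OF True h2] by simp
        next
          case False
          have "p1 \<in> nodes T" "c \<in> set (kids T p1)" "p2 \<in> nodes T" "c \<in> set (kids T p2)"
            using g3[OF False cB h1] g3[OF False cB h2] by auto
          then show ?thesis using up by blast
        qed
      qed
    qed
    show "\<forall>r \<in> roots T'. \<forall>p \<in> nodes T'. r \<notin> set (kids T' p)"
    proof (intro ballI notI)
      fix r p assume r: "r \<in> roots T'" and p: "p \<in> nodes T'" and rp: "r \<in> set (kids T' p)"
      have rr: "r \<in> roots T" "r \<in> nodes T" using r rootsx rt by auto
      have rB: "r \<noteq> B" using rk rr BP P by blast
      have rD: "r \<noteq> D" using rr D by blast
      have "(p = P \<and> r \<in> set (kids T P)) \<or> (p \<in> nodes T \<and> r \<in> set (kids T p))"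
        using ck[OF rp p] rB rD by blast
      then show False using rk rr P by blast
    qed
    show "\<forall>n \<in> nodes T'. \<exists>r \<in> roots T'. (r, n) \<in> (edges T')\<^sup>*"
    proof
      fix n assume n: "n \<in> nodes T'"
      show "\<exists>r \<in> roots T'. (r, n) \<in> (edges T')\<^sup>*"
      proof (cases "n = D")
        case True
        obtain r where "r \<in> roots T" "(r, P) \<in> (edges T)\<^sup>*" using reach P by blast
        then show ?thesis using reach1 PD rootsx True by (metis rtrancl.rtrancl_into_rtrancl)
      next
        case False
        then have "n \<in> nodes T" using n nx by simp
        then obtain r where "r \<in> roots T" "(r, n) \<in> (edges T)\<^sup>*" using reach by blast
        then show ?thesis using reach1 rootsx by blast
      qed
    qed
    show "\<forall>n \<in> nodes T'.
        (app T' n = None \<and> kids T' n = [] \<and> comp T' n \<noteq> None) \<or>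
        (app T' n \<noteq> None \<and> comp T' n = None)"
      using bi DB aP by (auto simp: appx kx compx nx repl_Nil)
    show "\<forall>n \<in> nodes T'. \<forall>c. comp T' n = Some c \<longrightarrow>
        c \<in> nodes T' \<and> app T' c \<noteq> None \<and> lab T' c = lab T' n"
    proof (intro ballI allI impI)
      fix n c assume n: "n \<in> nodes T'" and c: "comp T' n = Some c"
      then have "n \<noteq> D" "n \<in> nodes T" "comp T n = Some c" using nx by (auto simp: compx split: if_splits)
      then have "c \<in> nodes T" "app T c \<noteq> None" "lab T c = lab T n" using cp by blast+
      then show "c \<in> nodes T' \<and> app T' c \<noteq> None \<and> lab T' c = lab T' n"
        using \<open>n \<noteq> D\<close> D nx by (auto simp: appx labx)
    qed
    show "\<forall>n \<in> nodes T'. \<forall>th. app T' n = Some (Subst th) \<longrightarrow>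
        (\<exists>c. kids T' n = [c] \<and> lab T' n = sapp th (lab T' c))"
    proof (intro ballI allI impI)
      fix n th assume n: "n \<in> nodes T'" and a: "app T' n = Some (Subst th)"
      show "\<exists>c. kids T' n = [c] \<and> lab T' n = sapp th (lab T' c)"
      proof (cases "n = D")
        case True then show ?thesis using a DB es by (auto simp: appx kx labx)
      next
        case False
        then have n2: "n \<in> nodes T" "app T n = Some (Subst th)" "n \<noteq> P" using n a nx aP by (auto simp: appx)
        then obtain c where "kids T n = [c]" "lab T n = sapp th (lab T c)" using sb by blast
        moreover have "c \<noteq> D" using Dks[OF n2(1)] calculation by auto
        ultimately show ?thesis using False n2 by (auto simp: kx labx)
      qed
    qed
    show "\<forall>n \<in> nodes T'. \<forall>r. app T' n = Some (Rule r) \<longrightarrow>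
        valid r (map (lab T') (kids T' n)) (lab T' n)"
    proof (intro ballI allI impI)
      fix n r' assume n: "n \<in> nodes T'" and a: "app T' n = Some (Rule r')"
      then have n2: "n \<in> nodes T" "app T n = Some (Rule r')" "n \<noteq> D"
        using nx by (auto simp: appx split: if_splits)
      have v: "valid r' (map (lab T) (kids T n)) (lab T n)" using rl n2 by blast
      show "valid r' (map (lab T') (kids T' n)) (lab T' n)"
      proof (cases "n = P")
        case True
        have "map (lab T') (repl B D (kids T P)) = map (lab T') (kids T P)"
          by (rule map_repl) (simp add: labx DB)
        also have "\<dots> = map (lab T) (kids T P)" using mapl Dks P by blast
        finally have e3: "map (lab T') (repl B D (kids T P)) = map (lab T) (kids T P)" .
        have e1: "kids T' n = repl B D (kids T P)" using True DB by (auto simp: kx)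
        have e2: "lab T' n = lab T n" using n2 by (simp add: labx)
        show ?thesis unfolding e1 e2 e3 using v unfolding True .
      next
        case False
        have e3: "map (lab T') (kids T n) = map (lab T) (kids T n)" using mapl Dks n2(1) by blast
        have e1: "kids T' n = kids T n" using False n2 by (simp add: kx)
        have e2: "lab T' n = lab T n" using n2 by (simp add: labx)
        show ?thesis unfolding e1 e2 e3 by (rule v)
      qed
    qed
  qed
qed




lemma op1_preproof:
  assumes pre: "preproof sapp valid T"
    and N: "N \<in> nodes T" and P: "P \<in> nodes T" and aP: "app T P = Some (Subst th)"
    and NP: "N \<in> set (kids T P)" and kN: "kids T N \<noteq> []" and cN: "comp T N = None"
    and M: "M \<notin> nodes T"
    and T': "T' = T\<lparr> nodes := insert M (nodes T), roots := insert N (roots T),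
            lab := (lab T)(M := lab T N), app := (app T)(M := None),
            kids := (kids T)(P := repl N M (kids T P), M := []),
            comp := (comp T)(M := Some N) \<rparr>"
  shows "preproof sapp valid T'"
proof -
  note U = preproof_unfold[OF pre]
  note fin = U(1) and rt = U(2,3) and kd = U(4) and up = U(5) and rk = U(6) and reach = U(7)
    and bi = U(8) and cp = U(9) and sb = U(10) and rl = U(11)
  have MN: "M \<noteq> N" "M \<noteq> P" using M N P by auto
  have kP: "kids T P = [N]" using sb P aP NP by fastforce
  have aN: "app T N \<noteq> None" using bi N kN by auto
  have Mks: "M \<notin> set (kids T x)" if "x \<in> nodes T" for x using kd that M by blast
  have nx: "nodes T' = insert M (nodes T)" using T' by simp
  have kx: "kids T' x = (if x = M then [] else if x = P then [M] else kids T x)" for x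
    using T' MN kP by (auto simp: repl_single)
  have labx: "lab T' x = (if x = M then lab T N else lab T x)" for x using T' by simp
  have appx: "app T' x = (if x = M then None else app T x)" for x using T' by simp
  have compx: "comp T' x = (if x = M then Some N else comp T x)" for x using T' by simp
  have rootsx: "roots T' = insert N (roots T)" using T' by simp
  have ck: "c \<in> set (kids T' p) \<Longrightarrow> p \<in> nodes T' \<Longrightarrow>
     (p = P \<and> c = M) \<or> (p \<noteq> P \<and> p \<noteq> M \<and> p \<in> nodes T \<and> c \<in> set (kids T p) \<and> c \<noteq> M)" for c p
    using kx nx Mks by (auto split: if_splits)
  have reach1: "(r, n) \<in> (edges T')\<^sup>* \<or> (N, n) \<in> (edges T')\<^sup>*"
    if "(r, n) \<in> (edges T)\<^sup>*" for r n
    using that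
  proof (induction rule: rtrancl_induct)
    case base then show ?case by simp
  next
    case (step m n)
    show ?case
    proof (cases "m = P \<and> n = N")
      case True then show ?thesis by simp
    next
      case False
      have "m \<in> nodes T" "n \<in> set (kids T m)" using step(2) unfolding edges_def by auto
      then have "m \<in> nodes T'" "n \<in> set (kids T' m)" using False kP MN M nx by (auto simp: kx)
      then have "(m, n) \<in> edges T'" unfolding edges_def by auto
      then show ?thesis using step(3) by (meson rtrancl.rtrancl_into_rtrancl)
    qed
  qed
  have PM: "(P, M) \<in> edges T'" using P MN unfolding edges_def by (auto simp: kx nx)
  show ?thesis
    unfolding preproof_def
  proof (intro conjI)
    show "finite (nodes T')" using fin nx by simp
    show "roots T' \<subseteq> nodes T'" using rt N rootsx nx by auto
    show "roots T' \<noteq> {}" using rootsx by simp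
    show "\<forall>n \<in> nodes T'. set (kids T' n) \<subseteq> nodes T' \<and> distinct (kids T' n)"
    proof
      fix n assume n: "n \<in> nodes T'"
      show "set (kids T' n) \<subseteq> nodes T' \<and> distinct (kids T' n)"
        using n kd nx by (auto simp: kx)
    qed
    show "\<forall>p1 \<in> nodes T'. \<forall>p2 \<in> nodes T'. \<forall>c.
        c \<in> set (kids T' p1) \<longrightarrow> c \<in> set (kids T' p2) \<longrightarrow> p1 = p2"
    proof (intro ballI allI impI)
      fix p1 p2 c assume "p1 \<in> nodes T'" "p2 \<in> nodes T'" "c \<in> set (kids T' p1)" "c \<in> set (kids T' p2)"
      then have h1: "(p1 = P \<and> c = M) \<or> (p1 \<noteq> P \<and> p1 \<noteq> M \<and> p1 \<in> nodes T \<and> c \<in> set (kids T p1) \<and> c \<noteq> M)"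
        and h2: "(p2 = P \<and> c = M) \<or> (p2 \<noteq> P \<and> p2 \<noteq> M \<and> p2 \<in> nodes T \<and> c \<in> set (kids T p2) \<and> c \<noteq> M)"
        using ck by blast+
      show "p1 = p2"
      proof (cases "c = M")
        case True then show ?thesis using h1 h2 by simp
      next
        case False
        then have "p1 \<in> nodes T" "c \<in> set (kids T p1)" "p2 \<in> nodes T" "c \<in> set (kids T p2)"
          using h1 h2 by auto
        then show ?thesis using up by blast
      qed
    qed
    show "\<forall>r \<in> roots T'. \<forall>p \<in> nodes T'. r \<notin> set (kids T' p)"
    proof (intro ballI notI)
      fix r p assume r: "r \<in> roots T'" and p: "p \<in> nodes T'" and rp: "r \<in> set (kids T' p)"
      have rr: "r = N \<or> r \<in> roots T" using r rootsx by simp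
      have pp: "(p = P \<and> r = M) \<or> (p \<noteq> P \<and> p \<noteq> M \<and> p \<in> nodes T \<and> r \<in> set (kids T p) \<and> r \<noteq> M)"
        using ck rp p by blast
      have Mr: "M \<notin> roots T" using rt M by blast
      show False
      proof (cases "p = P \<and> r = M")
        case True then show False using rr Mr MN by auto
      next
        case False
        then have p2: "p \<noteq> P" "p \<in> nodes T" "r \<in> set (kids T p)" using pp by auto
        show False
        proof (cases "r = N")
          case True then show False using p2 up NP P by blast
        next
          case False then show False using rr rk p2 by blast
        qed
      qed
    qed
    show "\<forall>n \<in> nodes T'. \<exists>r \<in> roots T'. (r, n) \<in> (edges T')\<^sup>*"
    proof
      fix n assume n: "n \<in> nodes T'"
      have rN: "N \<in> roots T'" "roots T \<subseteq> roots T'" using rootsx by auto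
      show "\<exists>r \<in> roots T'. (r, n) \<in> (edges T')\<^sup>*"
      proof (cases "n = M")
        case True
        obtain r where r: "r \<in> roots T" "(r, P) \<in> (edges T)\<^sup>*" using reach P by blast
        have "(r, P) \<in> (edges T')\<^sup>* \<or> (N, P) \<in> (edges T')\<^sup>*" using reach1 r(2) by blast
        then have "(r, M) \<in> (edges T')\<^sup>* \<or> (N, M) \<in> (edges T')\<^sup>*" using PM by (meson rtrancl.rtrancl_into_rtrancl)
        then show ?thesis using rN r(1) True by blast
      next
        case False
        then have "n \<in> nodes T" using n nx by simp
        then obtain r where "r \<in> roots T" "(r, n) \<in> (edges T)\<^sup>*" using reach by blast
        then show ?thesis using reach1 rN by blast
      qed
    qed
    show "\<forall>n \<in> nodes T'.
        (app T' n = None \<and> kids T' n = [] \<and> comp T' n \<noteq> None) \<or>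
        (app T' n \<noteq> None \<and> comp T' n = None)"
    proof
      fix n assume n: "n \<in> nodes T'"
      show "(app T' n = None \<and> kids T' n = [] \<and> comp T' n \<noteq> None) \<or>
        (app T' n \<noteq> None \<and> comp T' n = None)"
      proof (cases "n = M")
        case True then show ?thesis by (simp add: appx kx compx)
      next
        case False
        then have n1: "n \<in> nodes T" using n nx by simp
        show ?thesis
        proof (cases "n = P")
          case True
          have "comp T P = None" using bi P aP by auto
          then show ?thesis using True False aP by (simp add: appx kx compx)
        next
          case nP: False
          show ?thesis using bi n1 False nP by (simp add: appx kx compx)
        qed
      qed
    qed
    show "\<forall>n \<in> nodes T'. \<forall>c. comp T' n = Some c \<longrightarrow>
        c \<in> nodes T' \<and> app T' c \<noteq> None \<and> lab T' c = lab T' n"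
    proof (intro ballI allI impI)
      fix n c assume n: "n \<in> nodes T'" and c: "comp T' n = Some c"
      show "c \<in> nodes T' \<and> app T' c \<noteq> None \<and> lab T' c = lab T' n"
      proof (cases "n = M")
        case True then show ?thesis using c N MN aN nx by (simp add: compx appx labx)
      next
        case False
        then have "n \<in> nodes T" "comp T n = Some c" using n c nx by (auto simp: compx)
        then have "c \<in> nodes T" "app T c \<noteq> None" "lab T c = lab T n" using cp by blast+
        then show ?thesis using False M nx by (auto simp: appx labx)
      qed
    qed
    show "\<forall>n \<in> nodes T'. \<forall>th. app T' n = Some (Subst th) \<longrightarrow>
        (\<exists>c. kids T' n = [c] \<and> lab T' n = sapp th (lab T' c))"
    proof (intro ballI allI impI)
      fix n th' assume n: "n \<in> nodes T'" and a: "app T' n = Some (Subst th')"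
      then have n2: "n \<in> nodes T" "app T n = Some (Subst th')" "n \<noteq> M"
        using nx by (auto simp: appx split: if_splits)
      show "\<exists>c. kids T' n = [c] \<and> lab T' n = sapp th' (lab T' c)"
      proof (cases "n = P")
        case True
        have "lab T P = sapp th' (lab T N)" using sb P aP kP n2 True by auto
        then show ?thesis using True MN by (simp add: kx labx)
      next
        case False
        obtain c where c: "kids T n = [c]" "lab T n = sapp th' (lab T c)" using sb n2 by blast
        moreover have "c \<noteq> M" using Mks[OF n2(1)] c by auto
        ultimately show ?thesis using False n2 by (simp add: kx labx)
      qed
    qed
    show "\<forall>n \<in> nodes T'. \<forall>r. app T' n = Some (Rule r) \<longrightarrow>
        valid r (map (lab T') (kids T' n)) (lab T' n)"
    proof (intro ballI allI impI)
      fix n r' assume n: "n \<in> nodes T'" and a: "app T' n = Some (Rule r')"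
      then have n2: "n \<in> nodes T" "app T n = Some (Rule r')" "n \<noteq> M" "n \<noteq> P"
        using nx aP by (auto simp: appx split: if_splits)
      have v: "valid r' (map (lab T) (kids T n)) (lab T n)" using rl n2 by blast
      have e3: "map (lab T') (kids T n) = map (lab T) (kids T n)" using Mks[OF n2(1)] by (auto simp: labx)
      have e1: "kids T' n = kids T n" using n2 by (simp add: kx)
      have e2: "lab T' n = lab T n" using n2 by (simp add: labx)
      show "valid r' (map (lab T') (kids T' n)) (lab T' n)" unfolding e1 e2 e3 by (rule v)
    qed
  qed
qed




lemma op2_preproof:
  assumes pre: "preproof sapp valid T" and es: "\<And>X. sapp eps X = X"
    and C: "C \<in> nodes T" "C \<notin> roots T" and B: "B \<in> nodes T" "comp T B = Some C"
    and P: "P \<in> nodes T" and CP: "C \<in> set (kids T P)"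
    and D: "D \<notin> nodes T" and E: "E \<notin> nodes T" and DE: "D \<noteq> E"
    and T': "T' = T\<lparr> nodes := insert D (insert E (nodes T)), roots := insert C (roots T),
            lab := (lab T)(D := lab T C, E := lab T C),
            app := (app T)(D := Some (Subst eps), E := None),
            kids := (kids T)(P := repl C D (kids T P), D := [E], E := []),
            comp := (comp T)(D := None, E := Some C) \<rparr>"
  shows "preproof sapp valid T'"
proof -
  note U = preproof_unfold[OF pre]
  note fin = U(1) and rt = U(2,3) and kd = U(4) and up = U(5) and rk = U(6) and reach = U(7)
    and bi = U(8) and cp = U(9) and sb = U(10) and rl = U(11)
  have aC: "app T C \<noteq> None" using cp B by blast
  have ne: "D \<noteq> C" "E \<noteq> C" "D \<noteq> P" "E \<noteq> P" using C P D E by auto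
  have Dks: "D \<notin> set (kids T x)" "E \<notin> set (kids T x)" if "x \<in> nodes T" for x using kd that D E by blast+
  have nx: "nodes T' = insert D (insert E (nodes T))" using T' by simp
  have kx: "kids T' x = (if x = E then [] else if x = D then [E] else if x = P then repl C D (kids T P) else kids T x)" for x
    using T' ne DE by auto
  have labx: "lab T' x = (if x = D then lab T C else if x = E then lab T C else lab T x)" for x using T' by simp
  have appx: "app T' x = (if x = E then None else if x = D then Some (Subst eps) else app T x)" for x using T' DE by simp
  have compx: "comp T' x = (if x = E then Some C else if x = D then None else comp T x)" for x using T' DE by simp
  have rootsx: "roots T' = insert C (roots T)" using T' by simp
  have ck: "c \<in> set (kids T' p) \<Longrightarrow> p \<in> nodes T' \<Longrightarrow>
     (p = D \<and> c = E) \<or> (p = P \<and> (c = D \<or> (c \<in> set (kids T P) \<and> c \<noteq> C))) \<or>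
     (p \<noteq> P \<and> p \<noteq> D \<and> p \<noteq> E \<and> p \<in> nodes T \<and> c \<in> set (kids T p) \<and> c \<noteq> D \<and> c \<noteq> E)" for c p
    using kx nx Dks ne DE by (auto simp: mem_repl split: if_splits)
  have reach1: "(r, n) \<in> (edges T')\<^sup>* \<or> (C, n) \<in> (edges T')\<^sup>*"
    if "(r, n) \<in> (edges T)\<^sup>*" for r n
    using that
  proof (induction rule: rtrancl_induct)
    case base then show ?case by simp
  next
    case (step m n)
    show ?case
    proof (cases "m = P \<and> n = C")
      case True then show ?thesis by simp
    next
      case False
      have mn: "m \<in> nodes T" "n \<in> set (kids T m)" using step(2) unfolding edges_def by auto
      have "m \<noteq> D" "m \<noteq> E" using mn D E by auto
      then have "m \<in> nodes T'" "n \<in> set (kids T' m)" using False mn nx by (auto simp: kx mem_repl)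
      then have "(m, n) \<in> edges T'" unfolding edges_def by auto
      then show ?thesis using step(3) by (meson rtrancl.rtrancl_into_rtrancl)
    qed
  qed
  have PD: "(P, D) \<in> edges T'" using P CP ne unfolding edges_def by (auto simp: kx nx mem_repl)
  have DEe: "(D, E) \<in> edges T'" using DE ne unfolding edges_def by (auto simp: kx nx)
  show ?thesis
    unfolding preproof_def
  proof (intro conjI)
    show "finite (nodes T')" using fin nx by simp
    show "roots T' \<subseteq> nodes T'" using rt C rootsx nx by auto
    show "roots T' \<noteq> {}" using rootsx by simp
    show "\<forall>n \<in> nodes T'. set (kids T' n) \<subseteq> nodes T' \<and> distinct (kids T' n)"
    proof
      fix n assume n: "n \<in> nodes T'"
      show "set (kids T' n) \<subseteq> nodes T' \<and> distinct (kids T' n)"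
        using n kd nx P Dks DE by (auto simp: kx set_repl intro!: distinct_repl)
    qed
    show "\<forall>p1 \<in> nodes T'. \<forall>p2 \<in> nodes T'. \<forall>c.
        c \<in> set (kids T' p1) \<longrightarrow> c \<in> set (kids T' p2) \<longrightarrow> p1 = p2"
    proof (intro ballI allI impI)
      fix p1 p2 c assume "p1 \<in> nodes T'" "p2 \<in> nodes T'" "c \<in> set (kids T' p1)" "c \<in> set (kids T' p2)"
      then have h1: "(p1 = D \<and> c = E) \<or> (p1 = P \<and> (c = D \<or> (c \<in> set (kids T P) \<and> c \<noteq> C))) \<or>
     (p1 \<noteq> P \<and> p1 \<noteq> D \<and> p1 \<noteq> E \<and> p1 \<in> nodes T \<and> c \<in> set (kids T p1) \<and> c \<noteq> D \<and> c \<noteq> E)"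
        and h2: "(p2 = D \<and> c = E) \<or> (p2 = P \<and> (c = D \<or> (c \<in> set (kids T P) \<and> c \<noteq> C))) \<or>
     (p2 \<noteq> P \<and> p2 \<noteq> D \<and> p2 \<noteq> E \<and> p2 \<in> nodes T \<and> c \<in> set (kids T p2) \<and> c \<noteq> D \<and> c \<noteq> E)"
        using ck by blast+
      have EP: "E \<notin> set (kids T P)" using Dks P by blast
      show "p1 = p2"
      proof (cases "c = E")
        case True
        have "p1 = D" using h1 True DE EP by auto
        moreover have "p2 = D" using h2 True DE EP by auto
        ultimately show ?thesis by simp
      next
        case cE: False
        show ?thesis
        proof (cases "c = D")
          case True
          have "p1 = P" using h1 True DE by auto
          moreover have "p2 = P" using h2 True DE by auto
          ultimately show ?thesis by simp
        next
          case False
          have "p1 \<in> nodes T" "c \<in> set (kids T p1)" "p2 \<in> nodes T" "c \<in> set (kids T p2)"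
            using h1 h2 False cE P by auto
          then show ?thesis using up by blast
        qed
      qed
    qed
    show "\<forall>r \<in> roots T'. \<forall>p \<in> nodes T'. r \<notin> set (kids T' p)"
    proof (intro ballI notI)
      fix r p assume r: "r \<in> roots T'" and p: "p \<in> nodes T'" and rp: "r \<in> set (kids T' p)"
      have rr: "r = C \<or> (r \<in> roots T \<and> r \<in> nodes T)" using r rootsx rt by auto
      have rDE: "r \<noteq> D" "r \<noteq> E" using rr C D E by auto
      have pp: "(p = P \<and> r \<in> set (kids T P) \<and> r \<noteq> C) \<or> (p \<noteq> P \<and> p \<in> nodes T \<and> r \<in> set (kids T p))"
        using ck[OF rp p] rDE by blast
      show False
      proof (cases "r = C")
        case True then show False using pp up CP P by blast
      next
        case False then show False using rr rk pp P by blast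
      qed
    qed
    show "\<forall>n \<in> nodes T'. \<exists>r \<in> roots T'. (r, n) \<in> (edges T')\<^sup>*"
    proof
      fix n assume n: "n \<in> nodes T'"
      have rN: "C \<in> roots T'" "roots T \<subseteq> roots T'" using rootsx by auto
      obtain r where r: "r \<in> roots T" "(r, P) \<in> (edges T)\<^sup>*" using reach P by blast
      have "(r, P) \<in> (edges T')\<^sup>* \<or> (C, P) \<in> (edges T')\<^sup>*" using reach1 r(2) by blast
      then have rD: "(r, D) \<in> (edges T')\<^sup>* \<or> (C, D) \<in> (edges T')\<^sup>*" using PD by (meson rtrancl.rtrancl_into_rtrancl)
      then have rE: "(r, E) \<in> (edges T')\<^sup>* \<or> (C, E) \<in> (edges T')\<^sup>*" using DEe by (meson rtrancl.rtrancl_into_rtrancl)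
      show "\<exists>r \<in> roots T'. (r, n) \<in> (edges T')\<^sup>*"
      proof (cases "n = D \<or> n = E")
        case True
        then show ?thesis using rD rE rN r(1) by blast
      next
        case False
        then have "n \<in> nodes T" using n nx by simp
        then obtain r where "r \<in> roots T" "(r, n) \<in> (edges T)\<^sup>*" using reach by blast
        then show ?thesis using reach1 rN by blast
      qed
    qed
    show "\<forall>n \<in> nodes T'.
        (app T' n = None \<and> kids T' n = [] \<and> comp T' n \<noteq> None) \<or>
        (app T' n \<noteq> None \<and> comp T' n = None)"
    proof
      fix n assume n: "n \<in> nodes T'"
      show "(app T' n = None \<and> kids T' n = [] \<and> comp T' n \<noteq> None) \<or>
        (app T' n \<noteq> None \<and> comp T' n = None)"
      proof (cases "n = D \<or> n = E")
        case True then show ?thesis using DE by (auto simp add: appx kx compx)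
      next
        case False
        then have n1: "n \<in> nodes T" using n nx by simp
        show ?thesis
        proof (cases "n = P")
          case True
          have "app T P \<noteq> None \<and> comp T P = None" using bi P CP by fastforce
          then show ?thesis using True False by (simp add: appx kx compx)
        next
          case nP: False
          show ?thesis using bi n1 False nP by (simp add: appx kx compx)
        qed
      qed
    qed
    show "\<forall>n \<in> nodes T'. \<forall>c. comp T' n = Some c \<longrightarrow>
        c \<in> nodes T' \<and> app T' c \<noteq> None \<and> lab T' c = lab T' n"
    proof (intro ballI allI impI)
      fix n c assume n: "n \<in> nodes T'" and c: "comp T' n = Some c"
      show "c \<in> nodes T' \<and> app T' c \<noteq> None \<and> lab T' c = lab T' n"
      proof (cases "n = E")
        case True then show ?thesis using c C aC nx ne DE by (simp add: compx appx labx)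
      next
        case False
        then have "n \<noteq> D" "n \<in> nodes T" "comp T n = Some c" using n c nx by (auto simp: compx split: if_splits)
        then have "c \<in> nodes T" "app T c \<noteq> None" "lab T c = lab T n" using cp by blast+
        then show ?thesis using False \<open>n \<noteq> D\<close> \<open>n \<in> nodes T\<close> D E nx by (auto simp: appx labx)
      qed
    qed
    show "\<forall>n \<in> nodes T'. \<forall>th. app T' n = Some (Subst th) \<longrightarrow>
        (\<exists>c. kids T' n = [c] \<and> lab T' n = sapp th (lab T' c))"
    proof (intro ballI allI impI)
      fix n th' assume n: "n \<in> nodes T'" and a: "app T' n = Some (Subst th')"
      show "\<exists>c. kids T' n = [c] \<and> lab T' n = sapp th' (lab T' c)"
      proof (cases "n = D")
        case True then show ?thesis using a DE es by (auto simp: appx kx labx)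
      next
        case nD: False
        then have n2: "n \<in> nodes T" "app T n = Some (Subst th')" "n \<noteq> E"
          using n a nx by (auto simp: appx split: if_splits)
        obtain c where c: "kids T n = [c]" "lab T n = sapp th' (lab T c)" using sb n2 by blast
        show ?thesis
        proof (cases "n = P")
          case True
          then have "c = C" using c CP by simp
          then have "kids T' n = [D]" "lab T' n = sapp th' (lab T' D)"
            using True c nD n2 ne DE by (simp_all add: kx labx repl_single)
          then show ?thesis by blast
        next
          case False
          have "c \<noteq> D" "c \<noteq> E" using Dks[OF n2(1)] c by auto
          then show ?thesis using c False nD n2 by (simp add: kx labx)
        qed
      qed
    qed
    show "\<forall>n \<in> nodes T'. \<forall>r. app T' n = Some (Rule r) \<longrightarrow>
        valid r (map (lab T') (kids T' n)) (lab T' n)"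
    proof (intro ballI allI impI)
      fix n r' assume n: "n \<in> nodes T'" and a: "app T' n = Some (Rule r')"
      then have n2: "n \<in> nodes T" "app T n = Some (Rule r')" "n \<noteq> D" "n \<noteq> E"
        using nx by (auto simp: appx split: if_splits)
      have v: "valid r' (map (lab T) (kids T n)) (lab T n)" using rl n2 by blast
      have e2: "lab T' n = lab T n" using n2 by (simp add: labx)
      have e3: "map (lab T') (kids T n) = map (lab T) (kids T n)"
        using Dks[OF n2(1)] by (auto simp: labx)
      show "valid r' (map (lab T') (kids T' n)) (lab T' n)"
      proof (cases "n = P")
        case True
        have "map (lab T') (repl C D (kids T P)) = map (lab T') (kids T P)"
          by (rule map_repl) (simp add: labx)
        then have e4: "map (lab T') (kids T' n) = map (lab T) (kids T n)"
          using True e3 n2 by (simp add: kx)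
        show ?thesis unfolding e2 e4 by (rule v)
      next
        case False
        have e1: "kids T' n = kids T n" using False n2 by (simp add: kx)
        show ?thesis unfolding e1 e2 e3 by (rule v)
      qed
    qed
  qed
qed




definition cA :: "('q, 'r, 's) ptset \<Rightarrow> nat set" where
  "cA T = {c. \<exists>n\<in>nodes T. comp T n = Some c} - roots T"
definition cB :: "('q, 'r, 's) ptset \<Rightarrow> nat set" where
  "cB T = {n \<in> nodes T. comp T n = None \<and> kids T n \<noteq> [] \<and>
     (\<exists>p\<in>nodes T. \<exists>th. app T p = Some (Subst th) \<and> n \<in> set (kids T p))}"
definition cC :: "('q, 'r, 's) ptset \<Rightarrow> nat set" where
  "cC T = {n. is_bud T n \<and> (\<exists>p\<in>nodes T. \<exists>r. app T p = Some (Rule r) \<and> n \<in> set (kids T p))}"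
definition meas :: "('q, 'r, 's) ptset \<Rightarrow> nat" where
  "meas T = 2 * card (cA T) + card (cB T) + card (cC T)"

lemma fin_c:
  assumes pre: "preproof sapp valid T"
  shows "finite (cA T)" "finite (cB T)" "finite (cC T)"
proof -
  note U = preproof_unfold[OF pre]
  have "cA T \<subseteq> nodes T" using U(9) unfolding cA_def by blast
  then show "finite (cA T)" using U(1) finite_subset by blast
  have "cB T \<subseteq> nodes T" unfolding cB_def by blast
  then show "finite (cB T)" using U(1) finite_subset by blast
  have "cC T \<subseteq> nodes T" unfolding cC_def is_bud_def by blast
  then show "finite (cC T)" using U(1) finite_subset by blast
qed

lemma op1_meas:
  assumes pre: "preproof sapp valid T"
    and N: "N \<in> nodes T" and P: "P \<in> nodes T" and aP: "app T P = Some (Subst th)"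
    and NP: "N \<in> set (kids T P)" and kN: "kids T N \<noteq> []" and cN: "comp T N = None"
    and M: "M \<notin> nodes T"
    and T': "T' = T\<lparr> nodes := insert M (nodes T), roots := insert N (roots T),
            lab := (lab T)(M := lab T N), app := (app T)(M := None),
            kids := (kids T)(P := repl N M (kids T P), M := []),
            comp := (comp T)(M := Some N) \<rparr>"
  shows "cA T' \<subseteq> cA T" "cB T' \<subseteq> cB T - {N}" "cC T' \<subseteq> cC T" "N \<in> cB T"
proof -
  note U = preproof_unfold[OF pre]
  note fin = U(1) and rt = U(2,3) and kd = U(4) and up = U(5) and rk = U(6) and reach = U(7)
    and bi = U(8) and cp = U(9) and sb = U(10) and rl = U(11)
  have MN: "M \<noteq> N" "M \<noteq> P" using M N P by auto
  have kP: "kids T P = [N]" using sb P aP NP by fastforce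
  have Mks: "M \<notin> set (kids T x)" if "x \<in> nodes T" for x using kd that M by blast
  have nx: "nodes T' = insert M (nodes T)" using T' by simp
  have kx: "kids T' x = (if x = M then [] else if x = P then [M] else kids T x)" for x
    using T' MN kP by (auto simp: repl_single)
  have appx: "app T' x = (if x = M then None else app T x)" for x using T' by simp
  have compx: "comp T' x = (if x = M then Some N else comp T x)" for x using T' by simp
  have rootsx: "roots T' = insert N (roots T)" using T' by simp
  have ck: "c \<in> set (kids T' p) \<Longrightarrow> p \<in> nodes T' \<Longrightarrow>
     (p = P \<and> c = M) \<or> (p \<noteq> P \<and> p \<noteq> M \<and> p \<in> nodes T \<and> c \<in> set (kids T p) \<and> c \<noteq> M)" for c p
    using kx nx Mks by (auto split: if_splits)
  show "N \<in> cB T" unfolding cB_def using N cN kN P aP NP by blast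
  show "cA T' \<subseteq> cA T"
  proof
    fix c assume "c \<in> cA T'"
    then obtain n where n: "n \<in> nodes T'" "comp T' n = Some c" "c \<notin> roots T'" unfolding cA_def by blast
    have nM: "n \<noteq> M"
    proof
      assume "n = M"
      then have "c = N" using n(2) compx[of M] by simp
      then show False using n(3) rootsx by simp
    qed
    have "comp T n = Some c" using n(2) compx[of n] nM by simp
    moreover have "n \<in> nodes T" using n(1) nx nM by simp
    moreover have "c \<notin> roots T" using n(3) rootsx by simp
    ultimately have "n \<in> nodes T" "comp T n = Some c" "c \<notin> roots T" by simp_all
    then show "c \<in> cA T" unfolding cA_def by blast
  qed
  show "cB T' \<subseteq> cB T - {N}"
  proof
    fix n assume "n \<in> cB T'"
    then obtain p th' where h: "n \<in> nodes T'" "comp T' n = None" "kids T' n \<noteq> []" "p \<in> nodes T'"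
      "app T' p = Some (Subst th')" "n \<in> set (kids T' p)" unfolding cB_def by blast
    have nM: "n \<noteq> M" using h(2) by (auto simp: compx)
    then have p2: "p \<noteq> P" "p \<noteq> M" "p \<in> nodes T" "n \<in> set (kids T p)" using ck[OF h(6) h(4)] by auto
    have nn: "n \<in> nodes T" using kd p2 by blast
    have nN: "n \<noteq> N" using up p2 P NP by blast
    have "kids T n \<noteq> []" using h(3) nM kP by (auto simp: kx split: if_splits)
    moreover have "app T p = Some (Subst th')" using h(5) p2 by (simp add: appx)
    moreover have "comp T n = None" using h(2) nM by (simp add: compx)
    ultimately show "n \<in> cB T - {N}" using nn nN p2 unfolding cB_def by blast
  qed
  show "cC T' \<subseteq> cC T"
  proof
    fix n assume "n \<in> cC T'"
    then obtain p r where h: "n \<in> nodes T'" "comp T' n \<noteq> None" "p \<in> nodes T'"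
      "app T' p = Some (Rule r)" "n \<in> set (kids T' p)" unfolding cC_def is_bud_def by blast
    have "p \<noteq> P" using h(4) aP MN by (auto simp: appx)
    then have p2: "p \<noteq> M" "p \<in> nodes T" "n \<in> set (kids T p)" "n \<noteq> M" using ck[OF h(5) h(3)] by auto
    have nn: "n \<in> nodes T" using kd p2 by blast
    have "app T p = Some (Rule r)" using h(4) p2 by (simp add: appx)
    moreover have "comp T n \<noteq> None" using h(2) p2 by (simp add: compx)
    ultimately show "n \<in> cC T" using nn p2 unfolding cC_def is_bud_def by blast
  qed
qed

lemma op3_meas:
  assumes pre: "preproof sapp valid T"
    and B: "is_bud T B" and P: "P \<in> nodes T" and aP: "app T P = Some (Rule r)"
    and BP: "B \<in> set (kids T P)" and D: "D \<notin> nodes T"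
    and T': "T' = T\<lparr> nodes := insert D (nodes T),
            lab := (lab T)(D := lab T B),
            app := (app T)(D := Some (Subst eps)),
            kids := (kids T)(P := repl B D (kids T P), D := [B]),
            comp := (comp T)(D := None) \<rparr>"
  shows "cA T' \<subseteq> cA T" "cB T' \<subseteq> cB T" "cC T' \<subseteq> cC T - {B}" "B \<in> cC T"
proof -
  note U = preproof_unfold[OF pre]
  note fin = U(1) and rt = U(2,3) and kd = U(4) and up = U(5) and rk = U(6) and reach = U(7)
    and bi = U(8) and cp = U(9) and sb = U(10) and rl = U(11)
  have Bn: "B \<in> nodes T" "comp T B \<noteq> None" using B unfolding is_bud_def by auto
  have DB: "D \<noteq> B" "D \<noteq> P" using D Bn P by auto
  have Dks: "D \<notin> set (kids T x)" if "x \<in> nodes T" for x using kd that D by blast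
  have nx: "nodes T' = insert D (nodes T)" using T' by simp
  have kx: "kids T' x = (if x = D then [B] else if x = P then repl B D (kids T P) else kids T x)" for x
    using T' DB by auto
  have ck: "c \<in> set (kids T' p) \<Longrightarrow> p \<in> nodes T' \<Longrightarrow>
     (p = D \<and> c = B) \<or> (p = P \<and> (c = D \<or> (c \<in> set (kids T P) \<and> c \<noteq> B))) \<or>
     (p \<noteq> P \<and> p \<noteq> D \<and> p \<in> nodes T \<and> c \<in> set (kids T p) \<and> c \<noteq> D)" for c p
    using kx nx Dks D DB by (auto simp: mem_repl split: if_splits)
  have appx: "app T' x = (if x = D then Some (Subst eps) else app T x)" for x using T' by simp
  have compx: "comp T' x = (if x = D then None else comp T x)" for x using T' by simp
  have rootsx: "roots T' = roots T" using T' by simp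
  show "B \<in> cC T" unfolding cC_def using B P aP BP by blast
  show "cA T' \<subseteq> cA T"
  proof
    fix c assume "c \<in> cA T'"
    then obtain n where n: "n \<in> nodes T'" "comp T' n = Some c" "c \<notin> roots T'" unfolding cA_def by blast
    have nD: "n \<noteq> D"
    proof
      assume "n = D"
      then show False using n(2) compx[of D] by simp
    qed
    have "comp T n = Some c" using n(2) compx[of n] nD by simp
    moreover have "n \<in> nodes T" using n(1) nx nD by simp
    moreover have "c \<notin> roots T" using n(3) rootsx by simp
    ultimately have "n \<in> nodes T" "comp T n = Some c" "c \<notin> roots T" by simp_all
    then show "c \<in> cA T" unfolding cA_def by blast
  qed
  show "cB T' \<subseteq> cB T"
  proof
    fix n assume "n \<in> cB T'"
    then obtain p th' where h: "n \<in> nodes T'" "comp T' n = None" "kids T' n \<noteq> []" "p \<in> nodes T'"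
      "app T' p = Some (Subst th')" "n \<in> set (kids T' p)" unfolding cB_def by blast
    have pP: "p \<noteq> P" using h(5) aP DB by (auto simp: appx)
    have nB: "\<not> (p = D \<and> n = B)" using h(2) Bn DB by (auto simp: compx)
    have p2: "p \<noteq> D" "p \<in> nodes T" "n \<in> set (kids T p)" "n \<noteq> D" using ck[OF h(6) h(4)] pP nB by auto
    have nn: "n \<in> nodes T" using kd p2 by blast
    have "kids T n \<noteq> []" using h(3) p2 by (auto simp: kx repl_Nil split: if_splits)
    moreover have "app T p = Some (Subst th')" using h(5) p2 by (simp add: appx)
    moreover have "comp T n = None" using h(2) p2 by (simp add: compx)
    ultimately show "n \<in> cB T" using nn p2 unfolding cB_def by blast
  qed
  show "cC T' \<subseteq> cC T - {B}"
  proof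
    fix n assume "n \<in> cC T'"
    then obtain p r' where h: "n \<in> nodes T'" "comp T' n \<noteq> None" "p \<in> nodes T'"
      "app T' p = Some (Rule r')" "n \<in> set (kids T' p)" unfolding cC_def is_bud_def by blast
    have nD: "n \<noteq> D" using h(2) by (auto simp: compx)
    have pD: "p \<noteq> D" using h(4) by (auto simp: appx)
    have c: "(p = P \<and> n \<in> set (kids T P) \<and> n \<noteq> B) \<or> (p \<noteq> P \<and> p \<in> nodes T \<and> n \<in> set (kids T p))"
      using ck[OF h(5) h(3)] nD pD by auto
    have p2: "p \<in> nodes T" "n \<in> set (kids T p)" "n \<noteq> B" using c P up BP by auto
    have nn: "n \<in> nodes T" using kd p2 by blast
    have "app T p = Some (Rule r')" using h(4) pD by (simp add: appx)
    moreover have "comp T n \<noteq> None" using h(2) nD by (simp add: compx)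
    ultimately show "n \<in> cC T - {B}" using nn p2 unfolding cC_def is_bud_def by blast
  qed
qed

lemma op2_meas:
  assumes pre: "preproof sapp valid T"
    and C: "C \<in> nodes T" "C \<notin> roots T" and B: "B \<in> nodes T" "comp T B = Some C"
    and P: "P \<in> nodes T" and CP: "C \<in> set (kids T P)"
    and D: "D \<notin> nodes T" and E: "E \<notin> nodes T" and DE: "D \<noteq> E"
    and T': "T' = T\<lparr> nodes := insert D (insert E (nodes T)), roots := insert C (roots T),
            lab := (lab T)(D := lab T C, E := lab T C),
            app := (app T)(D := Some (Subst eps), E := None),
            kids := (kids T)(P := repl C D (kids T P), D := [E], E := []),
            comp := (comp T)(D := None, E := Some C) \<rparr>"
  shows "cA T' \<subseteq> cA T - {C}" "cB T' \<subseteq> insert D (cB T)" "cC T' \<subseteq> cC T" "C \<in> cA T"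
proof -
  note U = preproof_unfold[OF pre]
  note fin = U(1) and rt = U(2,3) and kd = U(4) and up = U(5) and rk = U(6) and reach = U(7)
    and bi = U(8) and cp = U(9) and sb = U(10) and rl = U(11)
  have ne: "D \<noteq> C" "E \<noteq> C" "D \<noteq> P" "E \<noteq> P" using C P D E by auto
  have Dks: "D \<notin> set (kids T x)" "E \<notin> set (kids T x)" if "x \<in> nodes T" for x using kd that D E by blast+
  have nx: "nodes T' = insert D (insert E (nodes T))" using T' by simp
  have kx: "kids T' x = (if x = E then [] else if x = D then [E] else if x = P then repl C D (kids T P) else kids T x)" for x
    using T' ne DE by auto
  have appx: "app T' x = (if x = E then None else if x = D then Some (Subst eps) else app T x)" for x using T' DE by simp
  have compx: "comp T' x = (if x = E then Some C else if x = D then None else comp T x)" for x using T' DE by simp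
  have rootsx: "roots T' = insert C (roots T)" using T' by simp
  have ck: "c \<in> set (kids T' p) \<Longrightarrow> p \<in> nodes T' \<Longrightarrow>
     (p = D \<and> c = E) \<or> (p = P \<and> (c = D \<or> (c \<in> set (kids T P) \<and> c \<noteq> C))) \<or>
     (p \<noteq> P \<and> p \<noteq> D \<and> p \<noteq> E \<and> p \<in> nodes T \<and> c \<in> set (kids T p) \<and> c \<noteq> D \<and> c \<noteq> E)" for c p
    using kx nx Dks ne DE by (auto simp: mem_repl split: if_splits)
  show "C \<in> cA T" unfolding cA_def using B C by blast
  show "cA T' \<subseteq> cA T - {C}"
  proof
    fix c assume "c \<in> cA T'"
    then obtain n where n: "n \<in> nodes T'" "comp T' n = Some c" "c \<notin> roots T'" unfolding cA_def by blast
    have nE: "n \<noteq> E"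
    proof
      assume "n = E"
      then have "c = C" using n(2) compx[of E] by simp
      then show False using n(3) rootsx by simp
    qed
    have nD: "n \<noteq> D"
    proof
      assume "n = D"
      then show False using n(2) compx[of D] DE by simp
    qed
    have "comp T n = Some c" using n(2) compx[of n] nD nE by simp
    moreover have "n \<in> nodes T" using n(1) nx nD nE by simp
    moreover have "c \<notin> roots T" "c \<noteq> C" using n(3) rootsx by simp_all
    ultimately have "n \<in> nodes T" "comp T n = Some c" "c \<notin> roots T" "c \<noteq> C" by simp_all
    then show "c \<in> cA T - {C}" unfolding cA_def by blast
  qed
  show "cB T' \<subseteq> insert D (cB T)"
  proof
    fix n assume "n \<in> cB T'"
    then obtain p th' where h: "n \<in> nodes T'" "comp T' n = None" "kids T' n \<noteq> []" "p \<in> nodes T'"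
      "app T' p = Some (Subst th')" "n \<in> set (kids T' p)" unfolding cB_def by blast
    show "n \<in> insert D (cB T)"
    proof (cases "n = D")
      case True then show ?thesis by simp
    next
      case nD: False
      have nE: "n \<noteq> E" using h(2) by (auto simp: compx)
      have c: "(p = P \<and> n \<in> set (kids T P) \<and> n \<noteq> C) \<or> (p \<noteq> P \<and> p \<noteq> D \<and> p \<noteq> E \<and> p \<in> nodes T \<and> n \<in> set (kids T p))"
        using ck[OF h(6) h(4)] nD nE by auto
      have p2: "p \<in> nodes T" "n \<in> set (kids T p)" "p \<noteq> D" "p \<noteq> E" using c P ne by auto
      have nn: "n \<in> nodes T" using kd p2 by blast
      have "kids T n \<noteq> []" using h(3) nD nE by (auto simp: kx repl_Nil split: if_splits)
      moreover have "app T p = Some (Subst th')" using h(5) p2 by (simp add: appx)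
      moreover have "comp T n = None" using h(2) nD nE by (simp add: compx)
      ultimately show ?thesis using nn p2 unfolding cB_def by blast
    qed
  qed
  show "cC T' \<subseteq> cC T"
  proof
    fix n assume "n \<in> cC T'"
    then obtain p r' where h: "n \<in> nodes T'" "comp T' n \<noteq> None" "p \<in> nodes T'"
      "app T' p = Some (Rule r')" "n \<in> set (kids T' p)" unfolding cC_def is_bud_def by blast
    have pDE: "p \<noteq> D" "p \<noteq> E" using h(4) by (auto simp: appx split: if_splits)
    have nD: "n \<noteq> D" using h(2) DE by (auto simp: compx)
    have c: "(p = P \<and> n \<in> set (kids T P)) \<or> (p \<in> nodes T \<and> n \<in> set (kids T p) \<and> n \<noteq> E)"
      using ck[OF h(5) h(3)] nD pDE by auto
    have p2: "p \<in> nodes T" "n \<in> set (kids T p)" using c P by auto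
    have nn: "n \<in> nodes T" using kd p2 by blast
    then have nE: "n \<noteq> E" using E by auto
    have "app T p = Some (Rule r')" using h(4) pDE by (simp add: appx)
    moreover have "comp T n \<noteq> None" using h(2) nD nE by (simp add: compx)
    ultimately show "n \<in> cC T" using nn p2 unfolding cC_def is_bud_def by blast
  qed
qed




lemma step_pre:
  assumes pre: "preproof sapp valid T" and es: "\<And>X. sapp eps X = X"
    and st: "norm_step eps T T'"
  shows "preproof sapp valid T' \<and> meas T' < meas T"
proof -
  have fA: "finite (cA T)" and fB: "finite (cB T)" and fC: "finite (cC T)" using fin_c[OF pre] by auto
  from st consider "op1 T T'" | "op2 eps T T'" | "op3 eps T T'" unfolding norm_step_def by blast
  then show ?thesis
  proof cases
    case 1
    then obtain N P th M where h: "N \<in> nodes T" "P \<in> nodes T" "app T P = Some (Subst th)"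
     "N \<in> set (kids T P)" "kids T N \<noteq> []" "comp T N = None" "M \<notin> nodes T"
     "T' = T\<lparr> nodes := insert M (nodes T), roots := insert N (roots T),
            lab := (lab T)(M := lab T N), app := (app T)(M := None),
            kids := (kids T)(P := repl N M (kids T P), M := []),
            comp := (comp T)(M := Some N) \<rparr>" unfolding op1_def by blast
    have p: "preproof sapp valid T'" by (rule op1_preproof[OF pre h])
    note m = op1_meas[OF pre h]
    have "card (cA T') \<le> card (cA T)" using m(1) fA by (simp add: card_mono)
    moreover have "card (cB T') < card (cB T)"
      using m(2,4) fB by (meson card_Diff1_less card_mono finite_Diff le_less_trans)
    moreover have "card (cC T') \<le> card (cC T)" using m(3) fC by (simp add: card_mono)
    ultimately show ?thesis using p unfolding meas_def by simp
  next
    case 2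
    then obtain C P B D E where h: "C \<in> nodes T" "C \<notin> roots T" "B \<in> nodes T" "comp T B = Some C"
     "P \<in> nodes T" "C \<in> set (kids T P)" "D \<notin> nodes T" "E \<notin> nodes T" "D \<noteq> E"
     "T' = T\<lparr> nodes := insert D (insert E (nodes T)), roots := insert C (roots T),
            lab := (lab T)(D := lab T C, E := lab T C),
            app := (app T)(D := Some (Subst eps), E := None),
            kids := (kids T)(P := repl C D (kids T P), D := [E], E := []),
            comp := (comp T)(D := None, E := Some C) \<rparr>" unfolding op2_def by blast
    have p: "preproof sapp valid T'" by (rule op2_preproof[OF pre es h])
    note m = op2_meas[OF pre h]
    have "card (cA T') \<le> card (cA T - {C})" using m(1) fA by (simp add: card_mono)
    moreover have "card (cA T - {C}) = card (cA T) - 1" using m(4) fA by simp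
    moreover have "card (cA T) \<ge> 1" using m(4) fA by (metis One_nat_def Suc_leI card_gt_0_iff empty_iff)
    moreover have "card (cB T') \<le> card (insert D (cB T))" using m(2) fB by (simp add: card_mono)
    moreover have "card (insert D (cB T)) \<le> card (cB T) + 1" using fB by (simp add: card_insert_le_m1 card_insert_if)
    moreover have "card (cC T') \<le> card (cC T)" using m(3) fC by (simp add: card_mono)
    ultimately show ?thesis using p unfolding meas_def by linarith
  next
    case 3
    then obtain B P r D where h: "is_bud T B" "P \<in> nodes T" "app T P = Some (Rule r)" "B \<in> set (kids T P)"
     "D \<notin> nodes T"
     "T' = T\<lparr> nodes := insert D (nodes T),
            lab := (lab T)(D := lab T B),
            app := (app T)(D := Some (Subst eps)),
            kids := (kids T)(P := repl B D (kids T P), D := [B]),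
            comp := (comp T)(D := None) \<rparr>" unfolding op3_def by blast
    have p: "preproof sapp valid T'" by (rule op3_preproof[OF pre es h])
    note m = op3_meas[OF pre h]
    have "card (cA T') \<le> card (cA T)" using m(1) fA by (simp add: card_mono)
    moreover have "card (cC T') < card (cC T)"
      using m(3,4) fC by (meson card_Diff1_less card_mono finite_Diff le_less_trans)
    moreover have "card (cB T') \<le> card (cB T)" using m(2) fB by (simp add: card_mono)
    ultimately show ?thesis using p unfolding meas_def by simp
  qed
qed

lemma step_mono:
  assumes st: "norm_step eps T T'"
  shows "nodes T \<subseteq> nodes T' \<and> roots T \<subseteq> roots T' \<and> (\<forall>n\<in>nodes T. lab T' n = lab T n)"
  using st unfolding norm_step_def op1_def op2_def op3_def by auto

lemma reach_inv:
  assumes "(norm_step eps)\<^sup>*\<^sup>* T T'" and "preproof sapp valid T" and es: "\<And>X. sapp eps X = X"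
  shows "preproof sapp valid T' \<and> nodes T \<subseteq> nodes T' \<and> roots T \<subseteq> roots T' \<and> (\<forall>n\<in>nodes T. lab T' n = lab T n)"
  using assms(1)
proof (induction rule: rtranclp_induct)
  case base then show ?case using assms(2) by simp
next
  case (step y z)
  have py: "preproof sapp valid y" using step(3) by blast
  have "preproof sapp valid z" using step_pre[OF py es step(2)] by blast
  moreover have "nodes y \<subseteq> nodes z \<and> roots y \<subseteq> roots z \<and> (\<forall>n\<in>nodes y. lab z n = lab y n)"
    by (rule step_mono[OF step(2)])
  ultimately show ?case using step(3) by auto
qed

lemma exists_nf:
  assumes "preproof sapp valid T" and es: "\<And>X. sapp eps X = X"
  shows "\<exists>T'. (norm_step eps)\<^sup>*\<^sup>* T T' \<and> \<not> (\<exists>T''. norm_step eps T' T'')"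
  using assms(1)
proof (induction "meas T" arbitrary: T rule: less_induct)
  case less
  show ?case
  proof (cases "\<exists>T''. norm_step eps T T''")
    case True
    then obtain T1 where s: "norm_step eps T T1" by blast
    then have "preproof sapp valid T1 \<and> meas T1 < meas T" using step_pre[OF less(2) es] by blast
    then obtain T' where "(norm_step eps)\<^sup>*\<^sup>* T1 T'" "\<not> (\<exists>T''. norm_step eps T' T'')"
      using less(1) by blast
    then show ?thesis using s by (meson converse_rtranclp_into_rtranclp)
  next
    case False then show ?thesis by blast
  qed
qed

lemma fresh_nat: "finite (A :: nat set) \<Longrightarrow> \<exists>M. M \<notin> A"
  using ex_new_if_finite infinite_UNIV_nat by blast

lemma nf_cB:
  assumes pre: "preproof sapp valid T" and nf: "\<not> (\<exists>T''. norm_step eps T T'')"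
  shows "cB T = {}"
proof (rule ccontr)
  assume "cB T \<noteq> {}"
  then obtain N P th where h: "N \<in> nodes T" "comp T N = None" "kids T N \<noteq> []" "P \<in> nodes T"
    "app T P = Some (Subst th)" "N \<in> set (kids T P)" unfolding cB_def by blast
  obtain M where M: "M \<notin> nodes T" using fresh_nat preproof_unfold(1)[OF pre] by blast
  have "op1 T (T\<lparr> nodes := insert M (nodes T), roots := insert N (roots T),
            lab := (lab T)(M := lab T N), app := (app T)(M := None),
            kids := (kids T)(P := repl N M (kids T P), M := []),
            comp := (comp T)(M := Some N) \<rparr>)"
    unfolding op1_def using h M by blast
  then show False using nf unfolding norm_step_def by blast
qed

lemma nf_cC:
  assumes pre: "preproof sapp valid T" and nf: "\<not> (\<exists>T''. norm_step eps T T'')"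
  shows "cC T = {}"
proof (rule ccontr)
  assume "cC T \<noteq> {}"
  then obtain B P r where h: "is_bud T B" "P \<in> nodes T"
    "app T P = Some (Rule r)" "B \<in> set (kids T P)" unfolding cC_def by blast
  obtain D where D: "D \<notin> nodes T" using fresh_nat preproof_unfold(1)[OF pre] by blast
  have "op3 eps T (T\<lparr> nodes := insert D (nodes T),
            lab := (lab T)(D := lab T B),
            app := (app T)(D := Some (Subst eps)),
            kids := (kids T)(P := repl B D (kids T P), D := [B]),
            comp := (comp T)(D := None) \<rparr>)"
    unfolding op3_def using h D by blast
  then show False using nf unfolding norm_step_def by blast
qed




lemma rb_claims:
  assumes pre: "preproof sapp valid T" and nB: "cB T = {}" and nC: "cC T = {}"
    and rb: "rb_path T p"
  shows "(\<forall>x \<in> set p. subst_premise T x \<longleftrightarrow> x = last p) \<and>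
         (\<forall>x \<in> set p. subst_node T x \<longleftrightarrow> x = p ! (length p - 2))"
proof -
  note U = preproof_unfold[OF pre]
  note kd = U(4) and rk = U(6) and bi = U(8) and sb = U(10)
  define n where "n = length p"
  have n2: "2 \<le> n" using rb unfolding rb_path_def n_def by simp
  have sp: "set p \<subseteq> nodes T" using rb unfolding rb_path_def is_path_def by simp
  have stp: "\<And>i. Suc i < n \<Longrightarrow> p ! Suc i \<in> set (kids T (p ! i)) \<or> comp T (p ! i) = Some (p ! Suc i)"
    using rb unfolding rb_path_def is_path_def n_def by blast
  have "p \<noteq> []" using n2 n_def by auto
  then have hd: "p ! 0 \<in> roots T" using rb unfolding rb_path_def by (simp add: hd_conv_nth[symmetric])
  have nbud: "\<not> is_bud T (p ! i)" if "i < n - 1" for i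
  proof -
    have "butlast p ! i = p ! i" "i < length (butlast p)" using that n2 n_def by (auto simp: nth_butlast)
    then have "p ! i \<in> set (butlast p)" by (metis nth_mem)
    then show ?thesis using rb unfolding rb_path_def by blast
  qed
  have innodes: "p ! i \<in> nodes T" if "i < n" for i using sp that n_def by auto
  have compN: "comp T (p ! i) = None" if "i < n - 1" for i
    using nbud[OF that] innodes[of i] that unfolding is_bud_def by auto
  have kstep: "p ! Suc i \<in> set (kids T (p ! i))" if "i < n - 1" for i
    using stp[of i] compN[OF that] that by auto
  have lastp: "last p = p ! (n - 1)" using \<open>p \<noteq> []\<close> n_def by (simp add: last_conv_nth)
  have Bbud: "is_bud T (p ! (n - 1))" using rb lastp unfolding rb_path_def by simp
  define H where "H = p ! (n - 2)"
  have a1: "n - 2 < n - 1" "Suc (n - 2) = n - 1" using n2 by arith+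
  have HB: "p ! (n - 1) \<in> set (kids T H)" using kstep[OF a1(1)] unfolding H_def a1(2) .
  have Hn: "H \<in> nodes T" using innodes n2 unfolding H_def by simp
  have "app T H \<noteq> None" using bi Hn HB by fastforce
  moreover have "\<not> (\<exists>r. app T H = Some (Rule r))"
  proof
    assume "\<exists>r. app T H = Some (Rule r)"
    then have "p ! (n - 1) \<in> cC T" unfolding cC_def using Bbud Hn HB by blast
    then show False using nC by simp
  qed
  ultimately have "\<exists>th. app T H = Some (Subst th)"
  proof -
    assume a: "app T H \<noteq> None" "\<not> (\<exists>r. app T H = Some (Rule r))"
    then obtain s where s: "app T H = Some s" by blast
    show ?thesis
    proof (cases s)
      case (Rule r) then show ?thesis using a s by blast
    next
      case (Subst th) then show ?thesis using s by blast
    qed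
  qed
  then obtain th where Hs: "app T H = Some (Subst th)" by blast
  have inB: "x \<notin> cB T" for x using nB by simp
  have c1: "subst_premise T x \<longleftrightarrow> x = last p" if xp: "x \<in> set p" for x
  proof
    assume "x = last p"
    then have "x \<in> set (kids T H)" using HB lastp by simp
    then show "subst_premise T x" unfolding subst_premise_def using Hn Hs by blast
  next
    assume sx: "subst_premise T x"
    obtain i where i: "i < n" "x = p ! i" using xp unfolding n_def by (auto simp: in_set_conv_nth)
    show "x = last p"
    proof (cases "i = n - 1")
      case True then show ?thesis using i lastp by simp
    next
      case False
      then have il: "i < n - 1" using i by simp
      obtain q th' where q: "q \<in> nodes T" "app T q = Some (Subst th')" "x \<in> set (kids T q)"
        using sx unfolding subst_premise_def by blast
      show ?thesis
      proof (cases "i = 0")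
        case True
        then have "x \<in> roots T" using hd i by simp
        then show ?thesis using rk q by blast
      next
        case False
        have "kids T x \<noteq> []" using kstep[OF il] i by auto
        moreover have "comp T x = None" "x \<in> nodes T" using compN[OF il] innodes[OF i(1)] i by simp_all
        ultimately have "x \<in> cB T" unfolding cB_def using q by blast
        then show ?thesis using inB by blast
      qed
    qed
  qed
  have c2: "subst_node T x \<longleftrightarrow> x = p ! (length p - 2)" if xp: "x \<in> set p" for x
  proof
    assume "x = p ! (length p - 2)"
    then show "subst_node T x" unfolding subst_node_def using Hn Hs H_def n_def by blast
  next
    assume sx: "subst_node T x"
    obtain th' where ax: "app T x = Some (Subst th')" "x \<in> nodes T" using sx unfolding subst_node_def by blast
    obtain i where i: "i < n" "x = p ! i" using xp unfolding n_def by (auto simp: in_set_conv_nth)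
    show "x = p ! (length p - 2)"
    proof (cases "i < n - 2")
      case False
      then have "i = n - 2 \<or> i = n - 1" using i by linarith
      moreover have "i \<noteq> n - 1"
      proof
        assume "i = n - 1"
        then have "is_bud T x" using Bbud i by simp
        then have "app T x = None" using bi ax(2) unfolding is_bud_def by auto
        then show False using ax by simp
      qed
      ultimately show ?thesis using i n_def by simp
    next
      case True
      have il: "i < n - 1" "Suc i < n - 1" using True by auto
      obtain c where c: "kids T x = [c]" using sb ax by blast
      have y: "p ! Suc i \<in> set (kids T x)" using kstep[OF il(1)] i by simp
      then have "c = p ! Suc i" using c by simp
      have "kids T (p ! Suc i) \<noteq> []" using kstep[OF il(2)] by auto
      then have "p ! Suc i \<in> cB T" unfolding cB_def
        using compN[OF il(2)] innodes[of "Suc i"] il ax y by auto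
      then show ?thesis using inB by blast
    qed
  qed
  show ?thesis using c1 c2 by blast
qed

theorem mainTheorem3:
  fixes sapp :: "'s \<Rightarrow> 'q \<Rightarrow> 'q"
    and valid :: "'r \<Rightarrow> 'q list \<Rightarrow> 'q \<Rightarrow> bool"
    and eps :: 's
    and T :: "('q, 'r, 's) ptset"
    and R :: nat and S :: 'q
  assumes empty_subst: "\<And>X. sapp eps X = X"
    and pre: "preproof sapp valid T"
    and single_tree: "roots T = {R}"
    and root_lab: "lab T R = S"
  shows "(\<exists>T'. normalises eps T T') \<and>
         (\<forall>T'. normalises eps T T' \<longrightarrow>
            preproof sapp valid T' \<and>
            (\<exists>R' \<in> roots T'. lab T' R' = S) \<and>
            (\<forall>p. rb_path T' p \<longrightarrow>
               (\<forall>x \<in> set p. subst_premise T' x \<longleftrightarrow> x = last p) \<and>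
               (\<forall>x \<in> set p. subst_node T' x \<longleftrightarrow> x = p ! (length p - 2))))"
proof (intro conjI allI impI)
  show "\<exists>T'. normalises eps T T'"
    using exists_nf[OF pre empty_subst] unfolding normalises_def by blast
next
  fix T' assume nT: "normalises eps T T'"
  then have st: "(norm_step eps)\<^sup>*\<^sup>* T T'" and nf: "\<not> (\<exists>T''. norm_step eps T' T'')"
    unfolding normalises_def by auto
  have inv: "preproof sapp valid T' \<and> nodes T \<subseteq> nodes T' \<and> roots T \<subseteq> roots T' \<and> (\<forall>n\<in>nodes T. lab T' n = lab T n)"
    by (rule reach_inv[OF st pre empty_subst])
  then show "preproof sapp valid T'" by blast
  have Rn: "R \<in> nodes T" using preproof_unfold(2)[OF pre] single_tree by blast
  show "\<exists>R' \<in> roots T'. lab T' R' = S" using inv Rn single_tree root_lab by auto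
  fix p assume rb: "rb_path T' p"
  have pT: "preproof sapp valid T'" using inv by blast
  note c = rb_claims[OF pT nf_cB[OF pT nf] nf_cC[OF pT nf] rb]
  show "\<forall>x \<in> set p. subst_premise T' x \<longleftrightarrow> x = last p" using c by blast
  show "\<forall>x \<in> set p. subst_node T' x \<longleftrightarrow> x = p ! (length p - 2)" using c by blast
qed


end
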